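(* Let $G=\mathbb T^{\mathbb Z}$ (product topology, $\mathbb T=\mathbb R/\mathbb Z$) and $S:G\to G$ the shift $S(x)(n)=x(n+1)$. Let $x=(a_n)_{n\in\mathbb Z}\in G$ where the reals $a_n$ ($n\in\mathbb Z$) together with $1$ are linearly independent over $\mathbb Q$. Then there is no metrizable SIN group $H$ containing $G$ as a topological subgroup together with $t\in H$ such that $txt^{-1}=S(x)$.
   Context: A topological group is SIN if every neighborhood of the identity contains a neighborhood $V$ of the identity with $gVg^{-1}=V$ for all $g$; a metrizable group is SIN iff it admits a compatible two-sided invariant metric. *)

theory Defs
  imports "HOL-Analysis.Analysis" "HOL-Algebra.Group"
begin

definition topological_group :: "('a, 'b) monoid_scheme \<Rightarrow> 'a topology \<Rightarrow> bool" where
  "topological_group H T \<longleftrightarrow>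
     group H \<and> topspace T = carrier H \<and>
     continuous_map (prod_topology T T) T (\<lambda>(a, b). a \<otimes>\<^bsub>H\<^esub> b) \<and>
     continuous_map T T (\<lambda>a. inv\<^bsub>H\<^esub> a)"

definition nbhd_one :: "('a, 'b) monoid_scheme \<Rightarrow> 'a topology \<Rightarrow> 'a set \<Rightarrow> bool" where
  "nbhd_one H T U \<longleftrightarrow> (\<exists>W. openin T W \<and> \<one>\<^bsub>H\<^esub> \<in> W \<and> W \<subseteq> U)"

definition SIN_group :: "('a, 'b) monoid_scheme \<Rightarrow> 'a topology \<Rightarrow> bool" where
  "SIN_group H T \<longleftrightarrow>
     (\<forall>U. U \<subseteq> topspace T \<and> nbhd_one H T U \<longrightarrow>
        (\<exists>V. nbhd_one H T V \<and> V \<subseteq> U \<and>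
             (\<forall>g\<in>carrier H. (\<lambda>v. g \<otimes>\<^bsub>H\<^esub> v \<otimes>\<^bsub>H\<^esub> inv\<^bsub>H\<^esub> g) ` V = V)))"

text \<open>The circle group \<T> = \<real>/\<int>, realised as the unit circle in \<complex> (isomorphic as a
  topological group via t \<mapsto> exp(2\<pi> i t)), and G = \<T>^\<int> with the product topology.\<close>
definition torus_Z :: "(int \<Rightarrow> complex) monoid" where
  "torus_Z = \<lparr>carrier = PiE UNIV (\<lambda>_. sphere (0::complex) 1),
              mult = (\<lambda>f g n. f n * g n), one = (\<lambda>_. 1)\<rparr>"

definition torus_Z_top :: "(int \<Rightarrow> complex) topology" where
  "torus_Z_top = product_topology (\<lambda>_. subtopology euclidean (sphere (0::complex) 1)) UNIV"

definition shift_Z :: "(int \<Rightarrow> complex) \<Rightarrow> (int \<Rightarrow> complex)" where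
  "shift_Z x = (\<lambda>n. x (n + 1))"

definition to_circle :: "real \<Rightarrow> complex" where
  "to_circle t = exp (2 * of_real pi * \<i> * of_real t)"

definition Q_indep_with_one :: "(int \<Rightarrow> real) \<Rightarrow> bool" where
  "Q_indep_with_one a \<longleftrightarrow>
     (\<forall>(F::int set) (c::int \<Rightarrow> rat) (c0::rat). finite F \<longrightarrow>
        of_rat c0 + (\<Sum>n\<in>F. of_rat (c n) * a n) = 0 \<longrightarrow> c0 = 0 \<and> (\<forall>n\<in>F. c n = 0))"

end

theory Submission
  imports Defs
begin


lemma to_circle_cis: "to_circle t = cis (2*pi*t)"
  unfolding to_circle_def cis_conv_exp by (simp add: mult_ac)

lemma norm_to_circle[simp]: "norm (to_circle t) = 1"
  by (simp add: to_circle_cis)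

lemma to_circle_sphere[simp]: "to_circle t \<in> sphere 0 1"
  by simp

lemma to_circle_int_shift: "to_circle (s - of_int m) = to_circle s"
proof -
  have "cis (2 * pi * s - 2 * pi * of_int m) = cis (2 * pi * s) / cis (2 * pi * of_int m)"
    by (simp only: cis_divide)
  moreover have "cis (2 * pi * of_int m) = 1"
    by (rule cis_multiple_2pi) simp
  ultimately show ?thesis by (simp add: to_circle_cis right_diff_distrib)
qed

lemma sphere_to_circle: assumes "y \<in> sphere (0::complex) 1" shows "\<exists>b. y = to_circle b"
proof -
  have n: "norm y = 1" using assms by simp
  then have "y \<noteq> 0" by auto
  then have "cis (Arg y) = sgn y" by (rule cis_Arg)
  also have "sgn y = y" using n by (simp add: sgn_div_norm)
  finally have "y = cis (Arg y)" by simp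
  then have "y = to_circle (Arg y / (2*pi))" by (simp add: to_circle_cis)
  then show ?thesis by blast
qed

lemma isCont_to_circle: "isCont to_circle s"
  unfolding to_circle_def by (intro continuous_intros)

lemma to_circle_nat_mult: "to_circle (real m * t) = to_circle t ^ m"
  unfolding to_circle_def by (simp add: exp_of_nat_mult[symmetric] mult_ac)

lemma to_circle_neg: "to_circle (- t) = inverse (to_circle t)"
  unfolding to_circle_def by (simp add: exp_minus[symmetric])

lemma carrier_torus: "carrier torus_Z = {f. \<forall>n. f n \<in> sphere 0 1}"
  by (auto simp: torus_Z_def PiE_UNIV_domain)

lemma group_torus: "group torus_Z"
proof (rule groupI)
  fix x assume "x \<in> carrier torus_Z"
  then show "\<exists>y\<in>carrier torus_Z. y \<otimes>\<^bsub>torus_Z\<^esub> x = \<one>\<^bsub>torus_Z\<^esub>"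
  proof (intro bexI[of _ "\<lambda>n. inverse (x n)"])
    show "(\<lambda>n. inverse (x n)) \<in> carrier torus_Z" using \<open>x \<in> carrier torus_Z\<close>
      by (simp add: carrier_torus norm_inverse)
    have "x n \<noteq> 0" for n using \<open>x \<in> carrier torus_Z\<close> by (auto simp: carrier_torus) (metis norm_zero zero_neq_one)
    then show "(\<lambda>n. inverse (x n)) \<otimes>\<^bsub>torus_Z\<^esub> x = \<one>\<^bsub>torus_Z\<^esub>"
      by (simp add: torus_Z_def fun_eq_iff)
  qed
qed (auto simp: carrier_torus torus_Z_def norm_mult mult.assoc PiE_iff)

lemma torus_nat_pow: "f [^]\<^bsub>torus_Z\<^esub> (m::nat) = (\<lambda>n. f n ^ m)"
  by (induction m) (auto simp: torus_Z_def)

lemma torus_inv: assumes "f \<in> carrier torus_Z" shows "inv\<^bsub>torus_Z\<^esub> f = (\<lambda>n. inverse (f n))"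
proof -
  interpret group torus_Z by (rule group_torus)
  have "f n \<noteq> 0" for n using assms by (auto simp: carrier_torus) (metis norm_zero zero_neq_one)
  then show ?thesis using assms
    by (intro inv_equality) (auto simp: carrier_torus torus_Z_def fun_eq_iff norm_inverse)
qed

lemma torus_int_pow:
  "(\<lambda>n. to_circle (a n)) [^]\<^bsub>torus_Z\<^esub> (k::int) = (\<lambda>n. to_circle (of_int k * a n))"
proof (cases "k < 0")
  case True
  have c: "(\<lambda>n. to_circle (a n) ^ nat (-k)) \<in> carrier torus_Z"
    by (simp add: carrier_torus norm_power)
  have "of_int k = - real (nat (-k))" using True by simp
  then show ?thesis using True
    by (simp add: int_pow_def2 torus_inv[OF c] torus_nat_pow to_circle_neg to_circle_nat_mult del: of_nat_nat)
next
  case False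
  then have "of_int k = real (nat k)" by simp
  then show ?thesis using False
    by (simp add: int_pow_def2 torus_nat_pow to_circle_nat_mult del: of_nat_nat)
qed



lemma Q_indep_inj: assumes "Q_indep_with_one a" shows "inj a"
proof (rule injI, rule ccontr)
  fix n m assume e: "a n = a m" and nm: "n \<noteq> m"
  have "of_rat 0 + (\<Sum>i\<in>{n,m}. of_rat ((\<lambda>i. if i = n then 1 else -1) i) * a i) = 0"
    using e nm by simp
  with assms[unfolded Q_indep_with_one_def, rule_format, of "{n,m}" 0 "\<lambda>i. if i = n then 1 else -1"] nm show False by auto
qed

lemma Q_indep_ne1: assumes "Q_indep_with_one a" shows "a n \<noteq> 1"
proof
  assume e: "a n = 1"
  have "of_rat (-1) + (\<Sum>i\<in>{n}. of_rat ((\<lambda>i. 1) i) * a i) = 0"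
    using e by simp
  with assms[unfolded Q_indep_with_one_def, rule_format, of "{n}" "-1" "\<lambda>i. 1"] show False by auto
qed

lemma Q_indep_Z:
  assumes Q: "Q_indep_with_one a" and t: "finite t" "t \<subseteq> insert 1 (range a)"
    and s: "(\<Sum>v\<in>t. of_int (u v) * v) = 0" and v: "v \<in> t"
  shows "u v = 0"
proof -
  have inj: "inj a" by (rule Q_indep_inj[OF Q])
  define F0 where "F0 = a -` t"
  have fin: "finite F0" unfolding F0_def using t(1) inj by (simp add: finite_vimageI)
  have tsplit: "t = (t \<inter> {1}) \<union> a ` F0" using t(2) unfolding F0_def by auto
  have disj: "(t \<inter> {1}) \<inter> a ` F0 = {}" using Q_indep_ne1[OF Q] by auto
  define c0 :: rat where "c0 = (if 1 \<in> t then of_int (u 1) else 0)"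
  define c :: "int \<Rightarrow> rat" where "c = (\<lambda>n. of_int (u (a n)))"
  have "(\<Sum>v\<in>t. of_int (u v) * v) = (\<Sum>v\<in>t \<inter> {1}. of_int (u v) * v) + (\<Sum>v\<in>a ` F0. of_int (u v) * v)"
    by (subst tsplit, rule sum.union_disjoint) (use t fin disj in auto)
  also have "(\<Sum>v\<in>t \<inter> {1}. of_int (u v) * v) = of_rat c0"
    by (cases "1 \<in> t") (auto simp: c0_def)
  also have "(\<Sum>v\<in>a ` F0. of_int (u v) * v) = (\<Sum>n\<in>F0. of_rat (c n) * a n)"
    by (subst sum.reindex) (use inj in \<open>auto simp: c_def inj_on_def\<close>)
  finally have "of_rat c0 + (\<Sum>n\<in>F0. of_rat (c n) * a n) = 0" using s by simp
  with Q[unfolded Q_indep_with_one_def, rule_format, OF fin] 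
  have z: "c0 = 0" "\<And>n. n \<in> F0 \<Longrightarrow> c n = 0" by auto
  show ?thesis
  proof (cases "v = 1")
    case True then show ?thesis using z v by (simp add: c0_def)
  next
    case False
    then obtain n where "v = a n" using v t(2) by auto
    then show ?thesis using z(2)[of n] v by (simp add: c_def F0_def)
  qed
qed

lemma approx:
  assumes Q: "Q_indep_with_one a" and F: "finite F" and e: "\<epsilon> > 0"
  shows "\<exists>k::int. \<exists>m::int\<Rightarrow>int. \<forall>n\<in>F. \<bar>of_int k * a n - of_int (m n) - b n\<bar> < \<epsilon>"
proof -
  obtain e where e: "bij_betw e {0..<card F} F" using ex_bij_betw_nat_finite[OF F] by blast
  define N where "N = card F"
  define \<theta> where "\<theta> = (\<lambda>i. if i < N then a (e i) else 1)"
  define \<alpha> where "\<alpha> = (\<lambda>i. b (e i))"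
  interpret Modules.module "(\<lambda>r. (*) (real_of_int r))"
    by (simp add: Modules.module.intro distrib_left mult.commute)
  have inje: "inj_on e {..<N}" using e unfolding N_def bij_betw_def by (simp add: atLeast0LessThan)
  have inj: "inj_on \<theta> {..N}"
  proof (rule inj_onI)
    fix i j assume i: "i \<in> {..N}" and j: "j \<in> {..N}" and eq: "\<theta> i = \<theta> j"
    show "i = j"
    proof (cases "i < N"; cases "j < N")
      assume "i < N" "j < N" then show ?thesis using eq inje Q_indep_inj[OF Q]
        by (auto simp: \<theta>_def inj_on_def inj_def)
    next
      assume "i < N" "\<not> j < N" then show ?thesis using eq Q_indep_ne1[OF Q] by (auto simp: \<theta>_def)
    next
      assume "\<not> i < N" "j < N" then show ?thesis using eq Q_indep_ne1[OF Q] by (auto simp: \<theta>_def)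
    next
      assume "\<not> i < N" "\<not> j < N" then show ?thesis using i j by auto
    qed
  qed
  have sub: "\<theta> ` {..N} \<subseteq> insert 1 (range a)" by (auto simp: \<theta>_def)
  have ind: "independent (\<theta> ` {..N})"
    unfolding independent_explicit_module
  proof (intro allI impI)
    fix t u v assume "finite t" "t \<subseteq> \<theta> ` {..N}" "(\<Sum>v\<in>t. real_of_int (u v) * v) = 0" "v \<in> t"
    then show "u v = 0" using Q_indep_Z[OF Q, of t u v] sub by auto
  qed
  have "\<theta> N = 1" by (simp add: \<theta>_def)
  then obtain k m where km: "\<And>i. i < N \<Longrightarrow> \<bar>of_int k * \<theta> i - of_int (m i) - \<alpha> i\<bar> < \<epsilon>"
    using Kronecker_thm_2[of \<theta> N \<epsilon> \<alpha>] ind inj \<open>\<epsilon> > 0\<close> by blast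
  define m' where "m' = (\<lambda>n. m (inv_into {..<N} e n))"
  have "\<forall>n\<in>F. \<bar>of_int k * a n - of_int (m' n) - b n\<bar> < \<epsilon>"
  proof
    fix n assume "n \<in> F"
    then have "n \<in> e ` {..<N}" using e unfolding N_def bij_betw_def by (simp add: atLeast0LessThan)
    then obtain i where i: "i < N" "e i = n" by auto
    then have "inv_into {..<N} e n = i" using inje by (auto intro: inv_into_f_f)
    then show "\<bar>of_int k * a n - of_int (m' n) - b n\<bar> < \<epsilon>"
      using km[OF i(1)] i by (simp add: m'_def \<theta>_def \<alpha>_def)
  qed
  then show ?thesis by blast
qed



lemma local_circle:
  assumes U: "openin (subtopology euclidean (sphere (0::complex) 1)) U" and y: "y \<in> U"
  shows "\<exists>\<beta> d. d > 0 \<and> (\<forall>s. \<bar>s - \<beta>\<bar> < d \<longrightarrow> to_circle s \<in> U)"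
proof -
  obtain W where W: "open W" "U = W \<inter> sphere 0 1"
    using U by (auto simp: openin_subtopology openin_open)
  have "y \<in> sphere 0 1" using y W by auto
  then obtain \<beta> where b: "y = to_circle \<beta>" using sphere_to_circle by blast
  have "eventually (\<lambda>s. to_circle s \<in> W) (at \<beta>)"
    using isCont_to_circle[of \<beta>] W y b unfolding isCont_def
    by (auto intro: topological_tendstoD)
  then obtain d where d: "d > 0" "\<And>s. s \<noteq> \<beta> \<Longrightarrow> dist s \<beta> < d \<Longrightarrow> to_circle s \<in> W"
    by (auto simp: eventually_at)
  have "\<forall>s. \<bar>s - \<beta>\<bar> < d \<longrightarrow> to_circle s \<in> U"
  proof (intro allI impI)
    fix s assume "\<bar>s - \<beta>\<bar> < d"
    then have "to_circle s \<in> W" using d y b W by (cases "s = \<beta>") (auto simp: dist_real_def)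
    then show "to_circle s \<in> U" using W by simp
  qed
  then show ?thesis using d by blast
qed

lemma dense_orbit:
  assumes Q: "Q_indep_with_one a" and Ob: "openin torus_Z_top Ob" and y: "y \<in> Ob"
  shows "\<exists>k::int. (\<lambda>n. to_circle (of_int k * a n)) \<in> Ob"
proof -
  obtain U where U: "finite {i. U i \<noteq> sphere 0 1}"
    "\<And>i. openin (subtopology euclidean (sphere (0::complex) 1)) (U i)"
    "y \<in> PiE UNIV U" "PiE UNIV U \<subseteq> Ob"
    using Ob y unfolding torus_Z_top_def openin_product_topology_alt by fastforce
  define F where "F = {i. U i \<noteq> sphere 0 1}"
  have "\<forall>n. \<exists>\<beta> d. d > 0 \<and> (\<forall>s. \<bar>s - \<beta>\<bar> < d \<longrightarrow> to_circle s \<in> U n)"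
    using local_circle U(2,3) by (blast intro: PiE_mem)
  then obtain \<beta> d where bd: "\<And>n. d n > 0" "\<And>n s. \<bar>s - \<beta> n\<bar> < d n \<Longrightarrow> to_circle s \<in> U n"
    by metis
  define \<epsilon> where "\<epsilon> = Min (insert 1 (d ` F))"
  have finF: "finite F" using U(1) by (simp add: F_def)
  have e: "\<epsilon> > 0" unfolding \<epsilon>_def using finF bd(1) by auto
  have el: "\<epsilon> \<le> d n" if "n \<in> F" for n unfolding \<epsilon>_def using finF that by auto
  obtain k m where km: "\<forall>n\<in>F. \<bar>of_int k * a n - of_int (m n) - \<beta> n\<bar> < \<epsilon>"
    using approx[OF Q finF e, of \<beta>] by blast
  have "(\<lambda>n. to_circle (of_int k * a n)) \<in> PiE UNIV U"
  proof (rule PiE_I)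
    fix n assume "n \<in> (UNIV::int set)"
    show "to_circle (of_int k * a n) \<in> U n"
    proof (cases "n \<in> F")
      case True
      have "to_circle (of_int k * a n - of_int (m n)) \<in> U n"
        using km True el[OF True] by (intro bd(2)) auto
      then show ?thesis by (simp add: to_circle_int_shift)
    next
      case False then show ?thesis by (simp add: F_def)
    qed
  qed simp
  then show ?thesis using U(4) by blast
qed



lemma topspace_torus: "topspace torus_Z_top = carrier torus_Z"
  by (simp add: torus_Z_top_def torus_Z_def)

lemma shift_carrier: "y \<in> carrier torus_Z \<Longrightarrow> shift_Z y \<in> carrier torus_Z"
  by (simp add: carrier_torus shift_Z_def)

lemma shift_hom: "shift_Z \<in> hom torus_Z torus_Z"
  by (rule homI) (auto simp: shift_carrier shift_Z_def torus_Z_def)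

lemma shift_cont: "continuous_map torus_Z_top torus_Z_top shift_Z"
  unfolding torus_Z_top_def shift_Z_def continuous_map_componentwise_UNIV
  by (auto intro: continuous_map_product_projection)

theorem mainTheorem18:
  fixes a :: "int \<Rightarrow> real"
  assumes "Q_indep_with_one a"
  shows "\<not> (\<exists>(H :: 'h monoid) (T :: 'h topology) (\<phi> :: (int \<Rightarrow> complex) \<Rightarrow> 'h) t.
            topological_group H T \<and> metrizable_space T \<and> SIN_group H T \<and>
            \<phi> \<in> hom torus_Z H \<and> embedding_map torus_Z_top T \<phi> \<and>
            t \<in> carrier H \<and>
            t \<otimes>\<^bsub>H\<^esub> \<phi> (\<lambda>n. to_circle (a n)) \<otimes>\<^bsub>H\<^esub> inv\<^bsub>H\<^esub> t
              = \<phi> (shift_Z (\<lambda>n. to_circle (a n))))"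
proof
  assume "\<exists>(H :: 'h monoid) (T :: 'h topology) (\<phi> :: (int \<Rightarrow> complex) \<Rightarrow> 'h) t.
            topological_group H T \<and> metrizable_space T \<and> SIN_group H T \<and>
            \<phi> \<in> hom torus_Z H \<and> embedding_map torus_Z_top T \<phi> \<and>
            t \<in> carrier H \<and>
            t \<otimes>\<^bsub>H\<^esub> \<phi> (\<lambda>n. to_circle (a n)) \<otimes>\<^bsub>H\<^esub> inv\<^bsub>H\<^esub> t
              = \<phi> (shift_Z (\<lambda>n. to_circle (a n)))"
  then obtain H :: "'h monoid" and T :: "'h topology" and \<phi> t where
    TG: "topological_group H T" and MT: "metrizable_space T" and SIN: "SIN_group H T"
    and hom: "\<phi> \<in> hom torus_Z H" and emb: "embedding_map torus_Z_top T \<phi>"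
    and tH: "t \<in> carrier H"
    and conj: "t \<otimes>\<^bsub>H\<^esub> \<phi> (\<lambda>n. to_circle (a n)) \<otimes>\<^bsub>H\<^esub> inv\<^bsub>H\<^esub> t
              = \<phi> (shift_Z (\<lambda>n. to_circle (a n)))"
    by blast
  define G where "G = carrier torus_Z"
  define x where "x = (\<lambda>n. to_circle (a n))"
  define c where "c = (\<lambda>g. t \<otimes>\<^bsub>H\<^esub> g \<otimes>\<^bsub>H\<^esub> inv\<^bsub>H\<^esub> t)"
  have grH: "group H" and topT: "topspace T = carrier H"
    and mcont: "continuous_map (prod_topology T T) T (\<lambda>(a, b). a \<otimes>\<^bsub>H\<^esub> b)"
    and icont: "continuous_map T T (\<lambda>a. inv\<^bsub>H\<^esub> a)"
    using TG by (auto simp: topological_group_def)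
  interpret H: group H by (rule grH)
  have grG: "group torus_Z" by (rule group_torus)
  have homeo: "homeomorphic_map torus_Z_top (subtopology T (\<phi> ` G)) \<phi>"
    using emb by (simp add: embedding_map_def topspace_torus G_def)
  have phicont: "continuous_map torus_Z_top T \<phi>"
    using homeomorphic_imp_continuous_map[OF homeo] continuous_map_in_subtopology by blast
  have phiinj: "inj_on \<phi> G"
    using homeomorphic_imp_injective_map[OF homeo] by (simp add: topspace_torus G_def)
  have phiG: "\<phi> y \<in> carrier H" if "y \<in> G" for y
    using hom that by (auto simp: G_def hom_def)
  have xG: "x \<in> G" by (simp add: x_def G_def carrier_torus)
  have cG: "c g \<in> carrier H" if "g \<in> carrier H" for g using that tH by (simp add: c_def)
  have chom: "c \<in> hom H H"
  proof (rule homI)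
    fix g h assume g: "g \<in> carrier H" and h: "h \<in> carrier H"
    have canc: "inv\<^bsub>H\<^esub> t \<otimes>\<^bsub>H\<^esub> (t \<otimes>\<^bsub>H\<^esub> z) = z" if "z \<in> carrier H" for z
      using that tH by (simp add: H.m_assoc[symmetric])
    have "c g \<otimes>\<^bsub>H\<^esub> c h = t \<otimes>\<^bsub>H\<^esub> g \<otimes>\<^bsub>H\<^esub> (inv\<^bsub>H\<^esub> t \<otimes>\<^bsub>H\<^esub> t) \<otimes>\<^bsub>H\<^esub> h \<otimes>\<^bsub>H\<^esub> inv\<^bsub>H\<^esub> t"
      using g h tH by (simp add: c_def H.m_assoc canc)
    also have "\<dots> = c (g \<otimes>\<^bsub>H\<^esub> h)" using g h tH by (simp add: c_def H.m_assoc)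
    finally show "c (g \<otimes>\<^bsub>H\<^esub> h) = c g \<otimes>\<^bsub>H\<^esub> c h" by simp
  qed (simp add: cG)
  have ccont: "continuous_map T T c"
  proof -
    have "continuous_map T (prod_topology T T) (\<lambda>g. (t \<otimes>\<^bsub>H\<^esub> g, inv\<^bsub>H\<^esub> t))"
    proof (rule continuous_map_pairedI)
      have "continuous_map T (prod_topology T T) (\<lambda>g. (t, g))"
        using tH topT by (intro continuous_map_pairedI) auto
      from continuous_map_compose[OF this mcont]
      have "continuous_map T T ((\<lambda>(a, b). a \<otimes>\<^bsub>H\<^esub> b) \<circ> (\<lambda>g. (t, g)))" .
      moreover have "((\<lambda>(a, b). a \<otimes>\<^bsub>H\<^esub> b) \<circ> (\<lambda>g. (t, g))) = (\<lambda>g. t \<otimes>\<^bsub>H\<^esub> g)"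
        by (auto simp: fun_eq_iff)
      ultimately show "continuous_map T T (\<lambda>g. t \<otimes>\<^bsub>H\<^esub> g)" by simp
      show "continuous_map T T (\<lambda>g. inv\<^bsub>H\<^esub> t)" using tH topT by simp
    qed
    from continuous_map_compose[OF this mcont]
    have "continuous_map T T ((\<lambda>(a, b). a \<otimes>\<^bsub>H\<^esub> b) \<circ> (\<lambda>g. (t \<otimes>\<^bsub>H\<^esub> g, inv\<^bsub>H\<^esub> t)))" .
    moreover have "((\<lambda>(a, b). a \<otimes>\<^bsub>H\<^esub> b) \<circ> (\<lambda>g. (t \<otimes>\<^bsub>H\<^esub> g, inv\<^bsub>H\<^esub> t))) = c"
      by (auto simp: fun_eq_iff c_def)
    ultimately show ?thesis by simp
  qed
  have step1: "c (\<phi> y) = \<phi> (shift_Z y)" if yG: "y \<in> G" for y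
  proof (rule ccontr)
    assume ne: "c (\<phi> y) \<noteq> \<phi> (shift_Z y)"
    have "Hausdorff_space T" using MT by (rule metrizable_imp_Hausdorff_space)
    moreover have "c (\<phi> y) \<in> topspace T" "\<phi> (shift_Z y) \<in> topspace T"
      using yG phiG cG shift_carrier topT by (auto simp: G_def)
    ultimately obtain A B where AB: "openin T A" "openin T B" "c (\<phi> y) \<in> A"
      "\<phi> (shift_Z y) \<in> B" "disjnt A B"
      using ne unfolding Hausdorff_space_def by blast
    define Ob where "Ob = {z \<in> topspace torus_Z_top. (c \<circ> \<phi>) z \<in> A} \<inter>
                          {z \<in> topspace torus_Z_top. (\<phi> \<circ> shift_Z) z \<in> B}"
    have "openin torus_Z_top Ob" unfolding Ob_def
      by (intro openin_Int openin_continuous_map_preimage[OF _ AB(1)]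
          openin_continuous_map_preimage[OF _ AB(2)] continuous_map_compose[OF phicont ccont]
          continuous_map_compose[OF shift_cont phicont])
    moreover have "y \<in> Ob" using yG AB by (simp add: Ob_def topspace_torus G_def)
    ultimately obtain k :: int where k: "(\<lambda>n. to_circle (of_int k * a n)) \<in> Ob"
      using dense_orbit[OF assms] by blast
    have zk: "(\<lambda>n. to_circle (of_int k * a n)) = x [^]\<^bsub>torus_Z\<^esub> k"
      by (simp add: x_def torus_int_pow)
    have "c (\<phi> (x [^]\<^bsub>torus_Z\<^esub> k)) = c (\<phi> x) [^]\<^bsub>H\<^esub> k"
      using hom_int_pow[OF hom xG[unfolded G_def] grG grH] hom_int_pow[OF chom phiG[OF xG] grH grH]
      by simp
    also have "c (\<phi> x) = \<phi> (shift_Z x)" using conj by (simp add: c_def x_def)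
    also have "\<phi> (shift_Z x) [^]\<^bsub>H\<^esub> k = \<phi> (shift_Z (x [^]\<^bsub>torus_Z\<^esub> k))"
      using hom_int_pow[OF hom shift_carrier[OF xG[unfolded G_def]] grG grH]
        hom_int_pow[OF shift_hom xG[unfolded G_def] grG grG] by simp
    finally have "c (\<phi> (x [^]\<^bsub>torus_Z\<^esub> k)) = \<phi> (shift_Z (x [^]\<^bsub>torus_Z\<^esub> k))" .
    then show False using k AB(5) unfolding Ob_def zk by (auto simp: disjnt_def)
  qed
  define P where "P = {y \<in> topspace torus_Z_top. y 0 \<in> {z. Re z > 0} \<inter> sphere 0 1}"
  have Popen: "openin torus_Z_top P" unfolding P_def
  proof (rule openin_continuous_map_preimage)
    show "continuous_map torus_Z_top (subtopology euclidean (sphere (0::complex) 1)) (\<lambda>y. y 0)"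
      unfolding torus_Z_top_def by (rule continuous_map_product_projection) simp
    show "openin (subtopology euclidean (sphere (0::complex) 1)) ({z. Re z > 0} \<inter> sphere 0 1)"
      by (auto simp: openin_subtopology intro!: exI[of _ "{z. Re z > 0}"] open_halfspace_Re_gt)
  qed
  have "openin (subtopology T (\<phi> ` G)) (\<phi> ` P)"
    using homeomorphic_imp_open_map[OF homeo] Popen by (simp add: open_map_def)
  then obtain W0 where W0: "openin T W0" "\<phi> ` P = W0 \<inter> \<phi> ` G"
    by (auto simp: openin_subtopology)
  have one: "\<one>\<^bsub>torus_Z\<^esub> = (\<lambda>_. 1)" by (simp add: torus_Z_def)
  have oneG: "(\<lambda>_. 1) \<in> G" by (simp add: G_def carrier_torus)
  have phi1: "\<phi> (\<lambda>_. 1) = \<one>\<^bsub>H\<^esub>"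
    using hom_one[OF hom grG grH] one by simp
  have "(\<lambda>_. 1) \<in> P" using oneG by (simp add: P_def topspace_torus G_def)
  then have "\<phi> (\<lambda>_. 1) \<in> \<phi> ` P" by (rule imageI)
  then have "\<one>\<^bsub>H\<^esub> \<in> W0" unfolding W0(2) phi1 by (rule IntD1)
  then have "nbhd_one H T W0" using W0(1) by (auto simp: nbhd_one_def)
  moreover have "W0 \<subseteq> topspace T" using W0(1) by (rule openin_subset)
  ultimately have "\<exists>V. nbhd_one H T V \<and> V \<subseteq> W0 \<and>
             (\<forall>g\<in>carrier H. (\<lambda>v. g \<otimes>\<^bsub>H\<^esub> v \<otimes>\<^bsub>H\<^esub> inv\<^bsub>H\<^esub> g) ` V = V)"
    using SIN[unfolded SIN_group_def, rule_format, of W0] by simp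
  then obtain V where V: "nbhd_one H T V" "V \<subseteq> W0"
    "\<And>g. g \<in> carrier H \<Longrightarrow> (\<lambda>v. g \<otimes>\<^bsub>H\<^esub> v \<otimes>\<^bsub>H\<^esub> inv\<^bsub>H\<^esub> g) ` V = V"
    by blast
  have cV: "c ` V = V" using V(3)[OF tH] by (simp add: c_def)
  obtain W1 where W1: "openin T W1" "\<one>\<^bsub>H\<^esub> \<in> W1" "W1 \<subseteq> V"
    using V(1) by (auto simp: nbhd_one_def)
  define Q1 where "Q1 = {y \<in> topspace torus_Z_top. \<phi> y \<in> W1}"
  have "openin torus_Z_top Q1" unfolding Q1_def by (rule openin_continuous_map_preimage[OF phicont W1(1)])
  then have "\<forall>x\<in>Q1. \<exists>U. finite {i \<in> UNIV. U i \<noteq> topspace (subtopology euclidean (sphere (0::complex) 1))} \<and>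
                 (\<forall>i \<in> UNIV. openin (subtopology euclidean (sphere (0::complex) 1)) (U i)) \<and> x \<in> Pi\<^sub>E UNIV U \<and> Pi\<^sub>E UNIV U \<subseteq> Q1"
    unfolding torus_Z_top_def openin_product_topology_alt .
  moreover have "(\<lambda>_. 1) \<in> Q1" using oneG phi1 W1(2) by (simp add: Q1_def topspace_torus G_def)
  ultimately have "\<exists>U. finite {i \<in> UNIV. U i \<noteq> topspace (subtopology euclidean (sphere (0::complex) 1))} \<and>
                 (\<forall>i \<in> UNIV. openin (subtopology euclidean (sphere (0::complex) 1)) (U i)) \<and> (\<lambda>_. 1) \<in> Pi\<^sub>E UNIV U \<and> Pi\<^sub>E UNIV U \<subseteq> Q1"
    by (rule bspec)
  then obtain U where U: "finite {i. U i \<noteq> sphere 0 1}"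
    "(\<lambda>_. 1) \<in> PiE UNIV U" "PiE UNIV U \<subseteq> Q1"
    by auto
  define F where "F = {i. U i \<noteq> sphere 0 1}"
  have "finite {m::nat. int m \<in> F}" using U(1) unfolding F_def
    by (rule finite_vimageI[where h = int, unfolded vimage_def]) (simp add: inj_def)
  then obtain m :: nat where m: "int m \<notin> F"
    using ex_new_if_finite[OF infinite_UNIV_nat] by auto
  define y where "y = (\<lambda>n::int. if n = int m then -1 else (1::complex))"
  have yG: "y \<in> G" by (simp add: y_def G_def carrier_torus)
  have "y \<in> PiE UNIV U"
  proof (rule PiE_I)
    fix n assume "n \<in> (UNIV :: int set)"
    show "y n \<in> U n"
    proof (cases "n \<in> F")
      case True
      then have "n \<noteq> int m" using m by auto
      then show ?thesis using U(2) by (auto simp: y_def PiE_iff)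
    next
      case False
      then show ?thesis by (simp add: F_def y_def)
    qed
  qed simp
  then have "\<phi> y \<in> V" using U(3) W1(3) by (auto simp: Q1_def)
  have iter: "\<forall>y\<in>G. \<phi> y \<in> V \<longrightarrow> (\<lambda>n. y (n + int j)) \<in> G \<and> \<phi> (\<lambda>n. y (n + int j)) \<in> V" for j
  proof (induction j)
    case 0
    then show ?case by simp
  next
    case (Suc j)
    show ?case
    proof (intro ballI impI)
      fix y assume y: "y \<in> G" "\<phi> y \<in> V"
      with Suc have IH: "(\<lambda>n. y (n + int j)) \<in> G" "\<phi> (\<lambda>n. y (n + int j)) \<in> V" by auto
      have eq: "(\<lambda>n. y (n + int (Suc j))) = shift_Z (\<lambda>n. y (n + int j))"
        by (simp add: shift_Z_def algebra_simps)
      have "(\<lambda>n. y (n + int (Suc j))) \<in> G" using IH(1) eq shift_carrier by (simp add: G_def)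
      moreover have "\<phi> (\<lambda>n. y (n + int (Suc j))) \<in> V"
        using step1[OF IH(1)] eq IH(2) cV by (metis image_eqI)
      ultimately show "(\<lambda>n. y (n + int (Suc j))) \<in> G \<and> \<phi> (\<lambda>n. y (n + int (Suc j))) \<in> V" by blast
    qed
  qed
  define y' where "y' = (\<lambda>n. y (n + int m))"
  have y': "y' \<in> G" "\<phi> y' \<in> V" using iter[of m] yG \<open>\<phi> y \<in> V\<close> by (auto simp: y'_def)
  then have "\<phi> y' \<in> \<phi> ` P" using W0(2) V(2) by blast
  then obtain p where p: "p \<in> P" "\<phi> y' = \<phi> p" by auto
  have "p \<in> G" using p(1) by (simp add: P_def topspace_torus G_def)
  then have "p = y'" using phiinj p(2) y'(1) by (auto simp: inj_on_def)
  then show False using p(1) by (simp add: P_def y'_def y_def)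
qed

end
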